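(* Let $m,n\ge1$ and $k$ be integers with $|k|_m=n$, and let $G=\langle a,b\mid a^m=1=b^n,\ b^{-1}ab=a^k\rangle$. Let $s$ be an odd prime with $\gcd(s,m)=1$, $\zeta$ a primitive $m$-th root of unity in $\overline{\mathbb{F}}_s$, and $q$ a power of $s$. Assume that the automorphism $\tau(x)=x^q$ of $\overline{\mathbb{F}}_s$ acts transitively on $\mathscr{P}=\{\zeta,\zeta^k,\dots,\zeta^{k^{n-1}}\}$. Then the induced representation $\rho^G$ is realizable over $\mathbb{F}_q$.
   Context: $|k|_m$ denotes the multiplicative order of $k$ modulo $m$. $\rho:\langle a\rangle\to\overline{\mathbb{F}}_s^*$ is given by $\rho(a)=\zeta$ and $\rho^G$ is the induced representation of $G$; concretely it acts on a space with basis $e_0,\dots,e_{n-1}$ by $ae_i=\zeta^{k^i}e_i$, $be_i=e_{i+1}$ (indices modulo $n$). A representation of $G$ over $\overline{\mathbb{F}}_s$ is realizable over a subfield $\mathbb{F}_q$ if it is equivalent (over $\overline{\mathbb{F}}_s$) to a matrix representation all of whose matrices have entries in $\mathbb{F}_q$. *)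

theory Defs
  imports "HOL-Number_Theory.Number_Theory" "HOL-Computational_Algebra.Polynomial" "Jordan_Normal_Form.Matrix"
begin

(* multiplicative order |k|_m of an integer k modulo m (0 if not coprime) *)
definition mult_ord :: "nat \<Rightarrow> int \<Rightarrow> nat" where
  "mult_ord m k = (if coprime (int m) k then (LEAST d. d > 0 \<and> [k ^ d = 1] (mod int m)) else 0)"

definition prim_root :: "nat \<Rightarrow> 'a::field \<Rightarrow> bool" where
  "prim_root m z \<longleftrightarrow> z ^ m = 1 \<and> (\<forall>j. 0 < j \<and> j < m \<longrightarrow> z ^ j \<noteq> 1)"

(* K is an algebraic closure of F_s: algebraically closed and algebraic over the prime field *)
definition alg_closed :: "'a::field itself \<Rightarrow> bool" where
  "alg_closed _ \<longleftrightarrow> (\<forall>p :: 'a poly. degree p > 0 \<longrightarrow> (\<exists>x. poly p x = 0))"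

definition algebraic_over_prime :: "'a::field itself \<Rightarrow> bool" where
  "algebraic_over_prime _ \<longleftrightarrow>
     (\<forall>x :: 'a. \<exists>p :: int poly. poly (map_poly of_int p) x = 0 \<and> map_poly (of_int :: int \<Rightarrow> 'a) p \<noteq> 0)"

(* zeta^(k^i) for an integer k (exponent reduced mod m, zeta^m = 1) *)
definition zpow :: "nat \<Rightarrow> 'a::field \<Rightarrow> int \<Rightarrow> 'a" where
  "zpow m z e = z ^ nat (e mod int m)"

(* matrices of the induced representation rho^G on basis e_0..e_{n-1}:
   a e_i = zeta^(k^i) e_i,  b e_i = e_{i+1 mod n} *)
definition rep_a :: "nat \<Rightarrow> nat \<Rightarrow> int \<Rightarrow> 'a::field \<Rightarrow> 'a mat" where
  "rep_a m n k z = mat n n (\<lambda>(i,j). if i = j then zpow m z (k ^ j) else 0)"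

definition rep_b :: "nat \<Rightarrow> 'a::field mat" where
  "rep_b n = mat n n (\<lambda>(i,j). if i = (j + 1) mod n then 1 else 0)"

(* entries in the subfield F_q = {x. x^q = x} of the algebraic closure *)
definition entries_in_Fq :: "nat \<Rightarrow> 'a::field mat \<Rightarrow> bool" where
  "entries_in_Fq q M \<longleftrightarrow> (\<forall>i < dim_row M. \<forall>j < dim_col M. (M $$ (i,j)) ^ q = M $$ (i,j))"

end

theory Submission imports Defs "Jordan_Normal_Form.Determinant" begin

lemma frob_char:
  fixes x y :: "'a::field"
  assumes p: "prime (CHAR('a))"
  shows "(x + y) ^ CHAR('a) = x ^ CHAR('a) + y ^ CHAR('a)"
proof -
  let ?p = "CHAR('a)"
  have p0: "?p > 0" using p prime_gt_0_nat by blast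
  have "(x+y)^?p = (\<Sum>k\<le>?p. of_nat (?p choose k) * x ^ k * y ^ (?p - k))"
    by (simp add: binomial_ring)
  also have "\<dots> = (\<Sum>k\<in>{0,?p}. of_nat (?p choose k) * x ^ k * y ^ (?p - k))"
  proof (rule sum.mono_neutral_right)
    show "\<forall>i\<in>{..?p} - {0, ?p}. of_nat (?p choose i) * x ^ i * y ^ (?p - i) = 0"
    proof
      fix i assume i: "i \<in> {..?p} - {0, ?p}"
      have "?p dvd (?p choose i)" using i p0 p by (intro dvd_choose_prime) auto
      hence "of_nat (?p choose i) = (0::'a)" by (simp add: of_nat_eq_0_iff_char_dvd)
      thus "of_nat (?p choose i) * x ^ i * y ^ (?p - i) = 0" by simp
    qed
  qed auto
  also have "\<dots> = x ^ ?p + y ^ ?p" using p0 by simp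
  finally show ?thesis .
qed

lemma frob_pow:
  fixes x y :: "'a::field"
  assumes p: "prime (CHAR('a))"
  shows "(x + y) ^ (CHAR('a) ^ e) = x ^ (CHAR('a) ^ e) + y ^ (CHAR('a) ^ e)"
proof (induction e)
  case (Suc e)
  have "(x + y) ^ (CHAR('a) ^ Suc e) = ((x + y) ^ (CHAR('a) ^ e)) ^ CHAR('a)"
    by (simp add: power_mult[symmetric] mult.commute)
  also have "\<dots> = (x ^ (CHAR('a) ^ e))^ CHAR('a) + (y ^ (CHAR('a) ^ e)) ^ CHAR('a)"
    using Suc frob_char[OF p] by simp
  also have "\<dots> = x ^ (CHAR('a) ^ Suc e) + y ^ (CHAR('a) ^ Suc e)"
    by (simp add: power_mult[symmetric] mult.commute)
  finally show ?case .
qed simp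

lemma frob_hom:
  assumes p: "prime (CHAR('a::field))" and q: "q = CHAR('a) ^ e" and "e \<ge> 1"
  shows "semiring_hom (\<lambda>x::'a. x ^ q)"
  apply unfold_locales
  using assms frob_pow[OF p] prime_gt_0_nat[OF p] by (auto simp: power_mult_distrib)

definition shiftm :: "nat \<Rightarrow> nat \<Rightarrow> 'a::semiring_1 mat" where
  "shiftm n r = mat n n (\<lambda>(i,j). if j = (i + r) mod n then 1 else 0)"

lemma shiftm_carrier[simp]: "shiftm n r \<in> carrier_mat n n"
  by (simp add: shiftm_def)

lemma shiftm_mult:
  assumes "M \<in> carrier_mat n nc" "i < n" "j < nc"
  shows "(shiftm n r * M) $$ (i,j) = M $$ ((i+r) mod n, j)"
proof -
  have "(shiftm n r * M) $$ (i,j) = (\<Sum>l\<in>{0..<n}. (if l = (i+r) mod n then 1 else 0) * M $$ (l,j))"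
    using assms by (simp add: shiftm_def scalar_prod_def)
  also have "\<dots> = (\<Sum>l\<in>{0..<n}. (if l = (i+r) mod n then M $$ (l,j) else 0))"
    by (rule sum.cong) auto
  also have "\<dots> = M $$ ((i+r) mod n, j)" using assms by (simp add: sum.delta)
  finally show ?thesis .
qed

lemma rep_a_carrier[simp]: "rep_a m n k z \<in> carrier_mat n n"
  by (simp add: rep_a_def)

lemma rep_b_carrier[simp]: "rep_b n \<in> carrier_mat n n"
  by (simp add: rep_b_def)

lemma diag_mult:
  assumes "M \<in> carrier_mat n nc" "i < n" "j < nc"
  shows "(rep_a m n k z * M) $$ (i,j) = zpow m z (k ^ i) * M $$ (i, j)"
proof -
  have "(rep_a m n k z * M) $$ (i,j) = (\<Sum>l\<in>{0..<n}. (if i = l then zpow m z (k ^ l) else 0) * M $$ (l,j))"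
    using assms by (simp add: rep_a_def scalar_prod_def)
  also have "\<dots> = (\<Sum>l\<in>{0..<n}. (if l = i then zpow m z (k ^ i) * M $$ (l,j) else 0))"
    by (rule sum.cong) auto
  also have "\<dots> = zpow m z (k ^ i) * M $$ (i, j)" using assms by (simp add: sum.delta)
  finally show ?thesis .
qed

lemma shiftm_comm: "shiftm n a * shiftm n b = (shiftm n b * shiftm n a :: 'a::semiring_1 mat)"
proof (rule eq_matI)
  fix i j assume ij: "i < dim_row (shiftm n b * shiftm n a :: 'a mat)" "j < dim_col (shiftm n b * shiftm n a :: 'a mat)"
  hence ij: "i < n" "j < n" by (auto simp: shiftm_def)
  have e: "((i + a) mod n + b) mod n = ((i + b) mod n + a) mod n"
    by (metis add.assoc add.commute mod_add_left_eq)
  have n0: "n > 0" using ij by simp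
  have "(shiftm n a * shiftm n b :: 'a mat) $$ (i, j) = shiftm n b $$ ((i+a) mod n, j)"
    by (rule shiftm_mult) (use ij in auto)
  also have "\<dots> = (if j = ((i + a) mod n + b) mod n then 1 else 0)"
    using ij n0 by (simp add: shiftm_def)
  also have "\<dots> = (if j = ((i + b) mod n + a) mod n then 1 else 0)" by (simp only: e)
  also have "\<dots> = shiftm n a $$ ((i+b) mod n, j)"
    using ij n0 by (simp add: shiftm_def)
  also have "\<dots> = (shiftm n b * shiftm n a :: 'a mat) $$ (i, j)"
    by (rule shiftm_mult[symmetric]) (use ij in auto)
  finally show "(shiftm n a * shiftm n b :: 'a mat) $$ (i, j) = (shiftm n b * shiftm n a) $$ (i, j)" .
qed (auto simp: shiftm_def)

lemma mod_shift_aux: assumes "0 < i" "i < (n::nat)" shows "(i + (n - 1)) mod n = i - 1"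
proof -
  have "i + (n - 1) = (i - 1) + n" using assms by simp
  hence "(i + (n - 1)) mod n = (i - 1) mod n" by (simp only: mod_add_self2)
  also have "\<dots> = i - 1" using assms by (intro mod_less) simp
  finally show ?thesis .
qed

lemma rep_b_shift: assumes "n \<ge> 1" shows "rep_b n = shiftm n (n - 1)"
proof (rule eq_matI)
  fix i j assume "i < dim_row (shiftm n (n - 1) :: 'a mat)" "j < dim_col (shiftm n (n - 1) :: 'a mat)"
  hence ij: "i < n" "j < n" by (auto simp: shiftm_def)
  have "(i = (j + 1) mod n) = (j = (i + (n - 1)) mod n)"
  proof (cases "j + 1 = n")
    case True
    have l: "(i = (j + 1) mod n) = (i = 0)" using True by simp
    have r: "(j = (i + (n - 1)) mod n) = (i = 0)"
    proof
      assume h: "j = (i + (n - 1)) mod n"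
      show "i = 0"
      proof (rule ccontr)
        assume "i \<noteq> 0"
        hence "(i + (n - 1)) mod n = i - 1" using ij by (intro mod_shift_aux) auto
        thus False using h True ij \<open>i \<noteq> 0\<close> by simp
      qed
    next
      assume "i = 0" thus "j = (i + (n - 1)) mod n" using True by simp
    qed
    show ?thesis using l r by simp
  next
    case False
    hence j1: "j + 1 < n" using ij by auto
    show ?thesis
    proof
      assume "i = (j + 1) mod n"
      hence "i = j + 1" using j1 by simp
      hence "i + (n - 1) = j + n" using assms by simp
      thus "j = (i + (n - 1)) mod n" using ij by simp
    next
      assume h: "j = (i + (n - 1)) mod n"
      show "i = (j + 1) mod n"
      proof (cases "i = 0")
        case True
        then show ?thesis using h j1 assms by simp
      next
        case False
        hence "(i + (n - 1)) mod n = i - 1" using ij by (intro mod_shift_aux) auto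
        hence "j = i - 1" using h by simp
        thus ?thesis using False j1 by simp
      qed
    qed
  qed
  thus "rep_b n $$ (i, j) = shiftm n (n - 1) $$ (i, j)" using ij by (simp add: rep_b_def shiftm_def)
qed (auto simp: rep_b_def shiftm_def)

lemma pow_comm_shift:
  assumes X: "X \<in> carrier_mat n n" and Y: "Y \<in> carrier_mat n n" and S: "S \<in> carrier_mat n n"
    and XS: "X * S = S * Y"
  shows "X ^\<^sub>m i * S = S * Y ^\<^sub>m i"
proof (induction i)
  case 0
  then show ?case using X Y S by simp
next
  case (Suc i)
  have Xi: "X ^\<^sub>m i \<in> carrier_mat n n" and Yi: "Y ^\<^sub>m i \<in> carrier_mat n n" using X Y by auto
  have "X ^\<^sub>m Suc i * S = X ^\<^sub>m i * (X * S)" using Xi X S by (simp add: assoc_mult_mat[OF Xi X S])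
  also have "\<dots> = (X ^\<^sub>m i * S) * Y" using Xi S Y XS by simp
  also have "\<dots> = S * Y ^\<^sub>m i * Y" using Suc by simp
  also have "\<dots> = S * (Y ^\<^sub>m i * Y)" by (rule assoc_mult_mat[OF S Yi Y])
  finally show ?case by simp
qed

definition diagm :: "nat \<Rightarrow> (nat \<Rightarrow> 'a::semiring_1) \<Rightarrow> 'a mat" where
  "diagm n d = mat n n (\<lambda>(i,j). if i = j then d j else 0)"

lemma diagm_carrier[simp]: "diagm n d \<in> carrier_mat n n"
  by (simp add: diagm_def)

lemma rep_a_diagm: "rep_a m n k z = diagm n (\<lambda>j. zpow m z (k ^ j))"
  by (simp add: rep_a_def diagm_def)

lemma diagm_mult:
  assumes "M \<in> carrier_mat n nc" "i < n" "j < nc"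
  shows "(diagm n d * M) $$ (i,j) = d i * M $$ (i, j)"
proof -
  have "(diagm n d * M) $$ (i,j) = (\<Sum>l\<in>{0..<n}. (if i = l then d l else 0) * M $$ (l,j))"
    using assms by (simp add: diagm_def scalar_prod_def)
  also have "\<dots> = (\<Sum>l\<in>{0..<n}. (if l = i then d i * M $$ (l,j) else 0))"
    by (rule sum.cong) auto
  also have "\<dots> = d i * M $$ (i, j)" using assms by (simp add: sum.delta)
  finally show ?thesis .
qed

lemma map_diagm: "f 0 = 0 \<Longrightarrow> map_mat f (diagm n d) = diagm n (\<lambda>j. f (d j))"
  by (rule eq_matI) (auto simp: diagm_def)

lemma zpow_nat:
  assumes "z ^ m = 1" "m \<ge> 1"
  shows "z ^ a = zpow m z (int a)"
proof -
  have "zpow m z (int a) = z ^ (a mod m)" by (simp add: zpow_def zmod_int[symmetric])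
  moreover have "z ^ a = z ^ (m * (a div m) + a mod m)" by simp
  moreover have "\<dots> = (z ^ m) ^ (a div m) * z ^ (a mod m)" by (simp only: power_add power_mult)
  ultimately show ?thesis using assms by simp
qed

lemma zpow_cong: "[e1 = e2] (mod int m) \<Longrightarrow> zpow m z e1 = zpow m z e2"
  by (simp add: zpow_def cong_def)

lemma zpow_mult:
  assumes "z ^ m = 1" "m \<ge> 1"
  shows "zpow m z (a * b) = zpow m z b ^ nat (a mod int m)"
proof -
  have "zpow m z b ^ nat (a mod int m) = z ^ (nat (b mod m) * nat (a mod m))"
    by (simp add: zpow_def power_mult)
  also have "\<dots> = zpow m z (int (nat (b mod m) * nat (a mod m)))" by (rule zpow_nat[OF assms])
  also have "int (nat (b mod m) * nat (a mod m)) = (b mod m) * (a mod m)" using assms by simp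
  also have "zpow m z ((b mod m) * (a mod m)) = zpow m z (a * b)"
    by (rule zpow_cong) (simp add: cong_def mod_mult_eq mult.commute)
  finally show ?thesis by simp
qed

lemma prim_inj:
  fixes z :: "'a::field"
  assumes "prim_root m z" "a < m" "b < m" "z ^ a = z ^ b"
  shows "a = b"
proof (rule ccontr)
  assume ne: "a \<noteq> b"
  have zm: "z ^ m = 1" and pr: "\<And>j. 0 < j \<Longrightarrow> j < m \<Longrightarrow> z ^ j \<noteq> 1" using assms(1) by (auto simp: prim_root_def)
  have z0: "z \<noteq> 0" using zm assms(2) by (metis less_nat_zero_code neq0_conv power_0_left zero_neq_one)
  have aux: "\<And>a b. a < b \<Longrightarrow> b < m \<Longrightarrow> z ^ a = z ^ b \<Longrightarrow> False"
  proof -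
    fix a b assume ab: "a < b" "b < m" "z ^ a = z ^ b"
    have "z ^ b = z ^ a * z ^ (b - a)" using ab power_add[of z a "b - a"] by simp
    hence "z ^ (b - a) = 1" using ab z0 by simp
    thus False using pr[of "b - a"] ab by simp
  qed
  show False using ne aux[of a b] aux[of b a] assms by (cases "a < b") auto
qed

theorem lemma2p4:
  fixes m n s q :: nat and k :: int and \<zeta> :: "'a::field"
  assumes "m \<ge> 1" and "n \<ge> 1" and "mult_ord m k = n"
    and "alg_closed TYPE('a)" and "algebraic_over_prime TYPE('a)"
    and "prime s" and "odd s" and "CHAR('a) = s" and "coprime s m"
    and "prim_root m \<zeta>"
    and "\<exists>e \<ge> 1. q = s ^ e"
    and "\<forall>x \<in> {zpow m \<zeta> (k ^ i) | i. i < n}. x ^ q \<in> {zpow m \<zeta> (k ^ i) | i. i < n}"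
    and "\<forall>x \<in> {zpow m \<zeta> (k ^ i) | i. i < n}. \<forall>y \<in> {zpow m \<zeta> (k ^ i) | i. i < n}.
            \<exists>t. x ^ (q ^ t) = y"
  shows "\<exists>P Q. P \<in> carrier_mat n n \<and> Q \<in> carrier_mat n n \<and>
           P * Q = 1\<^sub>m n \<and> Q * P = 1\<^sub>m n \<and>
           (\<forall>i j. entries_in_Fq q (P * ((rep_a m n k \<zeta>) ^\<^sub>m i * (rep_b n) ^\<^sub>m j) * Q))"
proof -
  obtain e where e: "e \<ge> 1" "q = s ^ e" using assms(11) by auto
  have ps: "prime (CHAR('a))" using assms(6,8) by simp
  interpret h: semiring_hom "\<lambda>x::'a. x ^ q" using frob_hom[OF ps, of q e] e assms(8) by simp
  have q0: "q > 0" using e prime_gt_0_nat[OF assms(6)] by simp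
  have z1: "\<zeta> ^ m = 1" using assms(10) by (simp add: prim_root_def)
  have cop: "coprime (int m) k" using assms(2,3) by (auto simp: mult_ord_def split: if_splits)
  have nL: "n = (LEAST d. d > 0 \<and> [k ^ d = 1] (mod int m))" using assms(3) cop by (simp add: mult_ord_def)
  have ex: "\<exists>d. d > 0 \<and> [k ^ d = 1] (mod int m)"
  proof (cases "m = 1")
    case True then show ?thesis by (intro exI[of _ 1]) (simp add: cong_def)
  next
    case False
    hence "[k ^ totient (nat (int m)) = 1] (mod int m)"
      using residues.euler_theorem[of "int m" k] assms(1) cop by (simp add: residues_def coprime_commute)
    moreover have "totient m > 0" using assms(1) by simp
    ultimately show ?thesis by (intro exI[of _ "totient m"]) simp
  qed
  have kn: "[k ^ n = 1] (mod int m)" using LeastI_ex[OF ex] nL by simp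
  have nmin: "\<And>d. 0 < d \<Longrightarrow> [k ^ d = 1] (mod int m) \<Longrightarrow> n \<le> d" using nL by (simp add: Least_le)
  define x where "x i = zpow m \<zeta> (k ^ i)" for i
  have x0: "x 0 = \<zeta>" using zpow_nat[OF z1 assms(1), of 1] by (simp add: x_def)
  have n0: "0 < n" using assms(2) by simp
  have "x 0 \<in> {zpow m \<zeta> (k ^ i) | i. i < n}" unfolding x_def using n0 by blast
  hence "x 0 ^ q \<in> {zpow m \<zeta> (k ^ i) | i. i < n}" using assms(12) by blast
  then obtain r where r: "r < n" "\<zeta> ^ q = x r" using x0 by (auto simp: x_def)
  have kpow: "[k ^ t = k ^ (t mod n)] (mod int m)" for t
  proof -
    have "k ^ (t mod n + n * (t div n)) = k ^ (t mod n) * (k ^ n) ^ (t div n)"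
      by (simp only: power_add power_mult)
    hence "k ^ t = k ^ (t mod n) * (k ^ n) ^ (t div n)" by simp
    moreover have "[k ^ (t mod n) * (k ^ n) ^ (t div n) = k ^ (t mod n) * 1] (mod int m)"
      using cong_pow[OF kn, of "t div n"] by (intro cong_mult) auto
    ultimately show ?thesis by simp
  qed
  have K: "x i ^ q = x ((i + r) mod n)" for i
  proof -
    have "x i ^ q = (\<zeta> ^ q) ^ nat (k ^ i mod int m)"
      by (simp add: x_def zpow_def power_mult[symmetric] mult.commute)
    also have "\<dots> = zpow m \<zeta> (k ^ i * k ^ r)" using r by (simp add: x_def zpow_mult[OF z1 assms(1)])
    also have "\<dots> = zpow m \<zeta> (k ^ ((i + r) mod n))"
      by (rule zpow_cong) (simp add: power_add[symmetric] kpow)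
    finally show ?thesis by (simp add: x_def)
  qed
  have aux: "\<And>i j. i < j \<Longrightarrow> j < n \<Longrightarrow> x i = x j \<Longrightarrow> False"
  proof -
    fix i j assume ij: "i < j" "j < n" "x i = x j"
    have "nat (k ^ i mod int m) = nat (k ^ j mod int m)"
      using prim_inj[OF assms(10), of "nat (k ^ i mod int m)" "nat (k ^ j mod int m)"] ij(3) assms(1)
      by (simp add: x_def zpow_def nat_less_iff)
    hence "k ^ i mod int m = k ^ j mod int m" using assms(1) by (subst (asm) eq_nat_nat_iff) auto
    hence "[k ^ i * 1 = k ^ i * k ^ (j - i)] (mod int m)"
      using ij by (simp add: cong_def power_add[symmetric])
    moreover have "coprime (k ^ i) (int m)" using cop by (simp add: coprime_commute)
    ultimately have "[1 = k ^ (j - i)] (mod int m)" using cong_mult_lcancel by blast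
    hence "n \<le> j - i" using ij by (intro nmin) (auto simp: cong_sym_eq)
    thus False using ij by simp
  qed
  have xinj: "inj_on x {..<n}"
    by (rule inj_onI) (metis aux lessThan_iff linorder_neqE_nat)
  define W where "W = mat n n (\<lambda>(i,j). x i ^ j)"
  have Wc: "W \<in> carrier_mat n n" by (simp add: W_def)
  have detW: "det W \<noteq> 0"
  proof
    assume "det W = 0"
    then obtain v where v: "v \<in> carrier_vec n" "v \<noteq> 0\<^sub>v n" "W *\<^sub>v v = 0\<^sub>v n"
      using det_0_iff_vec_prod_zero_field[OF Wc] by auto
    define p where "p = (\<Sum>j<n. monom (v $ j) j)"
    have pv: "poly p y = (\<Sum>j\<in>{0..<n}. y ^ j * v $ j)" for y
      by (simp add: p_def poly_sum poly_monom lessThan_atLeast0 mult.commute)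
    have roots: "poly p (x i) = 0" if i: "i < n" for i
    proof -
      have "(W *\<^sub>v v) $ i = 0" using v(3) i by simp
      moreover have "(W *\<^sub>v v) $ i = (\<Sum>j\<in>{0..<n}. x i ^ j * v $ j)"
        using i v(1) by (simp add: W_def scalar_prod_def)
      ultimately show ?thesis using pv by simp
    qed
    have cp: "coeff p i = (if i < n then v $ i else 0)" for i
      by (simp add: p_def coeff_sum coeff_monom)
    obtain j where j: "j < n" "v $ j \<noteq> 0"
    proof -
      have "\<exists>j<n. v $ j \<noteq> 0"
      proof (rule ccontr)
        assume "\<not> ?thesis"
        hence "v = 0\<^sub>v n" using v(1) by (intro eq_vecI) auto
        thus False using v(2) by simp
      qed
      thus ?thesis using that by blast
    qed
    have p0: "p \<noteq> 0" using j cp[of j] by auto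
    have "degree p \<le> n - 1" by (rule degree_le) (auto simp: cp)
    hence dp: "degree p < n" using assms(2) by simp
    have sub: "x ` {..<n} \<subseteq> {y. poly p y = 0}" using roots by auto
    have "n = card (x ` {..<n})" using card_image[OF xinj] by simp
    also have "\<dots> \<le> card {y. poly p y = 0}" by (rule card_mono[OF poly_roots_finite[OF p0] sub])
    also have "\<dots> \<le> degree p" by (rule card_poly_roots_bound[OF p0])
    finally show False using dp by simp
  qed
  obtain P where Pc: "P \<in> carrier_mat n n" and PW: "P * W = 1\<^sub>m n" and WP: "W * P = 1\<^sub>m n"
    using det_non_zero_imp_unit[OF Wc detW, unfolded Units_def, of "()"]
    by (auto simp: ring_mat_def)
  define S :: "'a mat" where "S = shiftm n r"
  have Sc: "S \<in> carrier_mat n n" by (simp add: S_def)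
  let ?s = "map_mat (\<lambda>x::'a. x ^ q)"
  define A where "A = rep_a m n k \<zeta>"
  define B :: "'a mat" where "B = rep_b n"
  have Ac: "A \<in> carrier_mat n n" and Bc: "B \<in> carrier_mat n n" by (auto simp: A_def B_def)
  have sW: "?s W = S * W"
  proof (rule eq_matI)
    fix i j assume "i < dim_row (S * W)" "j < dim_col (S * W)"
    hence ij: "i < n" "j < n" using Sc Wc by auto
    have "(S * W) $$ (i, j) = W $$ ((i + r) mod n, j)" unfolding S_def by (rule shiftm_mult[OF Wc ij])
    also have "\<dots> = x ((i + r) mod n) ^ j" using ij by (simp add: W_def)
    also have "\<dots> = (x i ^ j) ^ q" by (simp add: K[symmetric] power_mult[symmetric] mult.commute)
    finally show "?s W $$ (i, j) = (S * W) $$ (i, j)" using ij by (simp add: W_def)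
  qed (use Sc Wc in auto)
  have sA: "?s A * S = S * A"
  proof (rule eq_matI)
    fix i j assume "i < dim_row (S * A)" "j < dim_col (S * A)"
    hence ij: "i < n" "j < n" using Sc Ac by auto
    have sAd: "?s A = diagm n (\<lambda>j. x j ^ q)"
      using q0 by (simp add: A_def rep_a_diagm map_diagm x_def)
    have "(?s A * S) $$ (i, j) = x i ^ q * S $$ (i, j)" unfolding sAd by (rule diagm_mult[OF Sc ij])
    also have "\<dots> = (if j = (i + r) mod n then x ((i + r) mod n) else 0)"
      using ij by (simp add: K S_def shiftm_def)
    also have "\<dots> = A $$ ((i + r) mod n, j)"
      using ij by (auto simp: A_def rep_a_def x_def)
    also have "\<dots> = (S * A) $$ (i, j)" unfolding S_def by (rule shiftm_mult[OF Ac ij, symmetric])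
    finally show "(?s A * S) $$ (i, j) = (S * A) $$ (i, j)" .
  qed (use Sc Ac in auto)
  have sB: "?s B = B"
    by (rule eq_matI) (use q0 in \<open>auto simp: B_def rep_b_def\<close>)
  have BS: "B * S = S * B" unfolding B_def S_def rep_b_shift[OF assms(2)] by (rule shiftm_comm)
  have sAc: "?s A \<in> carrier_mat n n" using Ac by simp
  have sX: "?s (A ^\<^sub>m i * B ^\<^sub>m j) * S = S * (A ^\<^sub>m i * B ^\<^sub>m j)" for i j
  proof -
    have Ai: "A ^\<^sub>m i \<in> carrier_mat n n" and Bj: "B ^\<^sub>m j \<in> carrier_mat n n"
      and sAi: "?s A ^\<^sub>m i \<in> carrier_mat n n" using Ac Bc sAc by auto
    have "?s (A ^\<^sub>m i * B ^\<^sub>m j) = ?s A ^\<^sub>m i * B ^\<^sub>m j"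
      using h.mat_hom_mult[OF Ai Bj] h.mat_hom_pow[OF Ac] h.mat_hom_pow[OF Bc] sB by simp
    hence "?s (A ^\<^sub>m i * B ^\<^sub>m j) * S = ?s A ^\<^sub>m i * (B ^\<^sub>m j * S)"
      using sAi Bj Sc by simp
    also have "\<dots> = ?s A ^\<^sub>m i * (S * B ^\<^sub>m j)"
      using pow_comm_shift[OF Bc Bc Sc BS] by simp
    also have "\<dots> = (?s A ^\<^sub>m i * S) * B ^\<^sub>m j" using sAi Bj Sc by simp
    also have "\<dots> = (S * A ^\<^sub>m i) * B ^\<^sub>m j" using pow_comm_shift[OF sAc Ac Sc sA] by simp
    also have "\<dots> = S * (A ^\<^sub>m i * B ^\<^sub>m j)" using Ai Bj Sc by simp
    finally show ?thesis .
  qed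
  have sPc: "?s P \<in> carrier_mat n n" using Pc by simp
  have sP: "?s P * S = P"
  proof -
    have "?s P * ?s W = 1\<^sub>m n" using h.mat_hom_mult[OF Pc Wc] PW h.mat_hom_one by simp
    hence PSW: "?s P * (S * W) = 1\<^sub>m n" using sW by simp
    have "?s P * S = ?s P * S * (W * P)" using WP sPc Sc by simp
    also have "\<dots> = ?s P * (S * (W * P))" by (rule assoc_mult_mat[OF sPc Sc mult_carrier_mat[OF Wc Pc]])
    also have "\<dots> = ?s P * ((S * W) * P)" using assoc_mult_mat[OF Sc Wc Pc] by simp
    also have "\<dots> = (?s P * (S * W)) * P" using assoc_mult_mat[OF sPc mult_carrier_mat[OF Sc Wc] Pc] by simp
    also have "\<dots> = P" using PSW Pc by simp
    finally show ?thesis .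
  qed
  show ?thesis
  proof (intro exI conjI allI)
    show "P \<in> carrier_mat n n" "W \<in> carrier_mat n n" "P * W = 1\<^sub>m n" "W * P = 1\<^sub>m n"
      using Pc Wc PW WP by auto
    fix i j
    let ?X = "A ^\<^sub>m i * B ^\<^sub>m j"
    have Xc: "?X \<in> carrier_mat n n" using Ac Bc by auto
    have sXc: "?s ?X \<in> carrier_mat n n" using Xc by simp
    have "?s (P * ?X * W) = ?s P * ?s ?X * ?s W"
      using h.mat_hom_mult[OF mult_carrier_mat[OF Pc Xc] Wc] h.mat_hom_mult[OF Pc Xc] by simp
    also have "\<dots> = ?s P * ?s ?X * (S * W)" using sW by simp
    also have "\<dots> = ?s P * (?s ?X * (S * W))" by (rule assoc_mult_mat[OF sPc sXc mult_carrier_mat[OF Sc Wc]])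
    also have "\<dots> = ?s P * ((?s ?X * S) * W)" using assoc_mult_mat[OF sXc Sc Wc] by simp
    also have "\<dots> = ?s P * ((S * ?X) * W)" using sX[of i j] by simp
    also have "\<dots> = (?s P * (S * ?X)) * W" using assoc_mult_mat[OF sPc mult_carrier_mat[OF Sc Xc] Wc] by simp
    also have "\<dots> = (?s P * S) * ?X * W" using assoc_mult_mat[OF sPc Sc Xc] by simp
    also have "\<dots> = P * ?X * W" using sP by simp
    finally have eq: "?s (P * ?X * W) = P * ?X * W" .
    show "entries_in_Fq q (P * (rep_a m n k \<zeta> ^\<^sub>m i * rep_b n ^\<^sub>m j) * W)"
      unfolding entries_in_Fq_def A_def[symmetric] B_def[symmetric]
    proof (intro allI impI)
      fix a b assume ab: "a < dim_row (P * ?X * W)" "b < dim_col (P * ?X * W)"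
      have "?s (P * ?X * W) $$ (a, b) = (P * ?X * W) $$ (a, b) ^ q"
        using ab by (simp del: index_mult_mat)
      thus "(P * ?X * W) $$ (a, b) ^ q = (P * ?X * W) $$ (a, b)" using eq by simp
    qed
  qed
qed

end
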